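(* Let $n\ge1$, $K\in\mathcal S_n$, $x\in\partial K$ and $u\in N_K(x)$. Then for $y=x-u$ we have $K\subseteq B(x-u,1)$, i.e. $y\in\partial K^c$. Moreover $-u\in N_{K^c}(y)$.
   Context: $B(x,r)$ is the closed Euclidean ball. For $A\subseteq\mathbb R^n$, $A^c=\bigcap_{x\in A}B(x,1)$ (with $\emptyset^c=\mathbb R^n$). $\mathcal S_n$ is the class of all sets of the form $\bigcap_{x\in A}B(x,1)$, $A\subseteq\mathbb R^n$. For a convex body $T$ and $z\in\partial T$, $N_T(z)$ denotes the set of unit outer normals of $T$ at $z$ (the outer normal cone at $z$ intersected with the unit sphere). *)

theory Defs
  imports "HOL-Analysis.Analysis"
begin

text \<open>The ball-polar (spindle convex hull style) operation:
  A^c = intersection of the closed unit balls centred at points of A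
  (the empty intersection is UNIV).\<close>
definition bcomp :: "'a::euclidean_space set \<Rightarrow> 'a set" where
  "bcomp A = (\<Inter>x\<in>A. cball x 1)"

definition S_class :: "'a::euclidean_space set set" where
  "S_class = {K. \<exists>A. K = bcomp A}"

definition unit_normals :: "'a::euclidean_space set \<Rightarrow> 'a \<Rightarrow> 'a set" where
  "unit_normals T z = {u. norm u = 1 \<and> (\<forall>w\<in>T. inner u (w - z) \<le> 0)}"

end

theory Submission
  imports Defs
begin

theorem lemma1p24:
  fixes K :: "'a::euclidean_space set" and x u :: 'a
  assumes "K \<in> S_class"
    and "x \<in> frontier K"
    and "u \<in> unit_normals K x"
  shows "K \<subseteq> cball (x - u) 1 \<and> x - u \<in> frontier (bcomp K)
         \<and> - u \<in> unit_normals (bcomp K) (x - u)"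
proof -
  obtain A where KA: "K = bcomp A" using assms(1) by (auto simp: S_class_def)
  have Kcl: "closed K" unfolding KA bcomp_def by (simp add: closed_INT)
  have xK: "x \<in> K" using assms(2) Kcl frontier_subset_closed by blast
  have nu: "norm u = 1" and nrm: "\<And>w. w \<in> K \<Longrightarrow> u \<bullet> (w - x) \<le> 0"
    using assms(3) by (auto simp: unit_normals_def)
  have uu: "u \<bullet> u = 1" using nu by (simp add: norm_eq_sqrt_inner)
  define c where "c = x - u"
  have P1: "K \<subseteq> cball c 1"
  proof
    fix w assume wK: "w \<in> K"
    show "w \<in> cball c 1"
    proof (rule ccontr)
      assume "w \<notin> cball c 1"
      hence g: "norm (w - c) > 1" by (simp add: dist_norm norm_minus_commute)
      define d where "d = w - x"
      have wc: "w - c = d + u" by (simp add: d_def c_def)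
      have "(norm (d + u))^2 > 1" using g wc
        by (metis less_1_mult power2_eq_square nu zero_less_one less_trans)
      hence h: "d \<bullet> d + 2 * (u \<bullet> d) > 0"
        by (simp add: power2_norm_eq_inner inner_add_left inner_add_right inner_commute uu)
      have ud: "u \<bullet> d \<le> 0" using nrm[OF wK] by (simp add: d_def)
      define e where "e = (d \<bullet> d - 2 * (u \<bullet> d)) / 4"
      have dd0: "d \<bullet> d \<ge> 0" by simp
      have "2 * (u \<bullet> d) \<le> d \<bullet> d" using dd0 ud by linarith
      hence e0: "e \<ge> 0" unfolding e_def by simp
      define v where "v = d + e *\<^sub>R u"
      have "u \<bullet> v = u \<bullet> d + e" by (simp add: v_def inner_add_right uu)
      hence uv: "u \<bullet> v > 0" using h unfolding e_def by (simp add: field_simps)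
      hence "v \<noteq> 0" by auto
      hence vv: "v \<bullet> v > 0" by simp
      have de: "d \<bullet> d - 2 * e > 0" using h by (simp add: e_def)
      define t where "t = min 1 ((d \<bullet> d - 2 * e) / (v \<bullet> v))"
      have t0: "t > 0" using de vv by (simp add: t_def)
      have t1: "t \<le> 1" by (simp add: t_def)
      have tv: "t * (v \<bullet> v) \<le> d \<bullet> d - 2 * e"
      proof -
        have "t \<le> (d \<bullet> d - 2 * e) / (v \<bullet> v)" by (simp add: t_def)
        thus ?thesis using vv by (simp add: pos_le_divide_eq)
      qed
      define p where "p = x + t *\<^sub>R v"
      have "p \<in> K" unfolding KA bcomp_def
      proof
        fix a assume aA: "a \<in> A"
        have xa: "norm (x - a) \<le> 1" using xK aA unfolding KA bcomp_def
          by (auto simp: dist_norm norm_minus_commute)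
        have wa: "norm (w - a) \<le> 1" using wK aA unfolding KA bcomp_def
          by (auto simp: dist_norm norm_minus_commute)
        define y where "y = a - x"
        define r where "r = norm y"
        have r1: "r \<le> 1" using xa by (simp add: r_def y_def norm_minus_commute)
        have r0: "r \<ge> 0" by (simp add: r_def)
        have yy: "y \<bullet> y = r * r" by (simp add: r_def power2_eq_square[symmetric] power2_norm_eq_inner)
        have "(norm (d - y))^2 \<le> 1" using wa
          by (simp add: d_def y_def abs_le_square_iff power_le_one)
        hence dy: "d \<bullet> d - 2 * (d \<bullet> y) + y \<bullet> y \<le> 1"
          by (simp add: power2_norm_eq_inner inner_diff_left inner_diff_right inner_commute)
        have uy: "- (u \<bullet> y) \<le> r" using Cauchy_Schwarz_ineq2[of u y] nu by (simp add: r_def)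
        have vy: "v \<bullet> y = d \<bullet> y + e * (u \<bullet> y)" by (simp add: v_def inner_add_left)
        have pa: "a - p = y - t *\<^sub>R v" by (simp add: p_def y_def)
        have "(norm (a - p))^2 = y \<bullet> y - 2 * t * (v \<bullet> y) + t * (t * (v \<bullet> v))"
          unfolding pa power2_norm_eq_inner
          by (simp add: inner_diff_left inner_diff_right inner_commute algebra_simps)
        also have "\<dots> \<le> 1"
        proof -
          have f1: "(r * r) * (1 - t) \<le> 1 * (1 - t)"
            using t1 r0 r1 by (intro mult_right_mono) (auto simp: mult_le_one)
          have f2: "(t * e) * (- (u \<bullet> y)) \<le> (t * e) * 1"
            using uy r1 t0 e0 by (intro mult_left_mono) auto
          have f3: "t * (t * (v \<bullet> v)) \<le> t * (d \<bullet> d - 2 * e)"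
            using tv t0 by (intro mult_left_mono) auto
          have f4: "t * (d \<bullet> y) \<ge> t * ((y \<bullet> y + d \<bullet> d - 1) / 2)"
            using dy t0 by (intro mult_left_mono) auto
          show ?thesis using f1 f2 f3 f4 yy vy by (simp add: algebra_simps)
        qed
        finally have "(norm (a - p))^2 \<le> 1" .
        hence "norm (a - p) \<le> 1" by (simp add: power_le_one_iff)
        thus "p \<in> cball a 1" by (simp add: dist_norm)
      qed
      hence "u \<bullet> (p - x) \<le> 0" by (rule nrm)
      moreover have "u \<bullet> (p - x) = t * (u \<bullet> v)" by (simp add: p_def)
      ultimately show False using t0 uv by (metis mult_pos_pos not_le)
    qed
  qed
  have cB: "c \<in> bcomp K" using P1 by (auto simp: bcomp_def dist_commute)
  have Bcl: "closed (bcomp K)" unfolding bcomp_def by (simp add: closed_INT)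
  have P2: "c \<in> frontier (bcomp K)"
  proof -
    have "c \<notin> interior (bcomp K)"
    proof
      assume "c \<in> interior (bcomp K)"
      then obtain s where s: "s > 0" "ball c s \<subseteq> bcomp K"
        using mem_interior by blast
      define q where "q = c - (s/2) *\<^sub>R u"
      have "dist c q < s" using s nu by (simp add: q_def dist_norm)
      hence "q \<in> bcomp K" using s by auto
      hence "dist x q \<le> 1" using xK by (auto simp: bcomp_def)
      moreover have "x - q = (1 + s/2) *\<^sub>R u" by (simp add: q_def c_def algebra_simps)
      hence "dist x q = 1 + s/2" using s nu by (simp add: dist_norm)
      ultimately show False using s by simp
    qed
    thus ?thesis using cB Bcl by (simp add: frontier_def closure_closed)
  qed
  have P3: "- u \<in> unit_normals (bcomp K) c"
  proof -
    have "(-u) \<bullet> (z - c) \<le> 0" if zB: "z \<in> bcomp K" for z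
    proof -
      have "norm (x - z) \<le> 1" using zB xK by (auto simp: bcomp_def dist_norm)
      hence "(norm (u - (z - c)))^2 \<le> 1" by (simp add: c_def abs_le_square_iff power_le_one algebra_simps)
      hence "u \<bullet> u - 2 * (u \<bullet> (z - c)) + (z - c) \<bullet> (z - c) \<le> 1"
        by (simp add: power2_norm_eq_inner inner_diff_left inner_diff_right inner_commute)
      moreover have "(z - c) \<bullet> (z - c) \<ge> 0" by simp
      ultimately have "u \<bullet> (z - c) \<ge> 0" using uu by linarith
      thus ?thesis by simp
    qed
    thus ?thesis using nu by (simp add: unit_normals_def)
  qed
  show ?thesis using P1 P2 P3 by (simp add: c_def)
qed

end
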